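(* There exists $h_*\in(0,1)$ with the following property. Let $t\ge0$, $R>1$, and let $h$ be a minimizer of $E$ subject to $h(1)=h(R)=1$, with $h(r)\ge h_*$ for all $r\in[1,R]$. Then for every $x$ with $1\le|x|\le R$ and every $\mathbf V\in S_0$, \[ \varphi(\mathbf V):=\frac25v_0^2+v_3^2+v_4^2-\frac{\sqrt6}{2}\mathrm{tr}\,\mathbf V^3+\frac38|\mathbf V|^4+5\left(2(\mathbf H(x)\cdot\mathbf V)+|\mathbf V|^2\right)^2\ge0, \] with equality if and only if $\mathbf V=0$; here $v_0,\dots,v_4$ are the components of $\mathbf V$ in the basis $\mathbf E,\mathbf F,\mathbf G,\mathbf X,\mathbf Y$ at $x$.
   Context: $S_0$: real symmetric traceless $3\times3$ matrices; $\mathbf A\cdot\mathbf B=A_{ij}B_{ij}$, $|\mathbf V|^2=\mathbf V\cdot\mathbf V$. $h_+=\frac{3+\sqrt{9+8t}}{4}$; $E[h]=\int_1^R\frac{r^2}{2}(h')^2+3h^2+r^2[\frac t8(1-h^2)^2+\frac{h_+}{8}(1+3h^4-4h^3)]dr$. With $r=|x|$, $\hat x=x/r$: $\mathbf H(x)=\sqrt{3/2}\,h(r)(\hat x\otimes\hat x-\mathbf I/3)$. In spherical coordinates $(r,\theta,\phi)$: $\mathbf n=\hat x$, $\mathbf m=(\cos\theta\cos\phi,\cos\theta\sin\phi,-\sin\theta)$, $\mathbf p=(-\sin\phi,\cos\phi,0)$; $\mathbf E=\mathbf n\otimes\mathbf n-\mathbf I/3$, $\mathbf F=\mathbf n\otimes\mathbf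 m+\mathbf m\otimes\mathbf n$, $\mathbf G=\mathbf n\otimes\mathbf p+\mathbf p\otimes\mathbf n$, $\mathbf X=\mathbf m\otimes\mathbf p+\mathbf p\otimes\mathbf m$, $\mathbf Y=\mathbf m\otimes\mathbf m-\mathbf p\otimes\mathbf p$; $\mathbf V=v_0\mathbf E+v_1\mathbf F+v_2\mathbf G+v_3\mathbf X+v_4\mathbf Y$. *)

theory Defs
  imports "HOL-Analysis.Analysis"
begin

type_synonym mat3 = "real^3^3"

definition hplus :: "real \<Rightarrow> real" where
  "hplus t = (3 + sqrt (9 + 8 * t)) / 4"

definition energy_density :: "real \<Rightarrow> (real \<Rightarrow> real) \<Rightarrow> real \<Rightarrow> real" where
  "energy_density t h r =
     r^2 / 2 * (deriv h r)^2 + 3 * (h r)^2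
     + r^2 * (t / 8 * (1 - (h r)^2)^2 + hplus t / 8 * (1 + 3 * (h r)^4 - 4 * (h r)^3))"

definition energy :: "real \<Rightarrow> real \<Rightarrow> (real \<Rightarrow> real) \<Rightarrow> real" where
  "energy t R h = integral {1..R} (energy_density t h)"

definition admissible :: "real \<Rightarrow> (real \<Rightarrow> real) \<Rightarrow> bool" where
  "admissible R h \<longleftrightarrow> h C1_differentiable_on {1..R} \<and> h 1 = 1 \<and> h R = 1"

definition is_minimizer :: "real \<Rightarrow> real \<Rightarrow> (real \<Rightarrow> real) \<Rightarrow> bool" where
  "is_minimizer t R h \<longleftrightarrow> admissible R h \<and>
     (\<forall>g. admissible R g \<longrightarrow> energy t R h \<le> energy t R g)"

definition S0 :: "mat3 set" where
  "S0 = {V. transpose V = V \<and> trace V = 0}"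

definition mdot :: "mat3 \<Rightarrow> mat3 \<Rightarrow> real" where
  "mdot A B = (\<Sum>i\<in>UNIV. \<Sum>j\<in>UNIV. A $ i $ j * B $ i $ j)"

definition outer :: "real^3 \<Rightarrow> real^3 \<Rightarrow> mat3" where
  "outer u w = (\<chi> i j. u $ i * w $ j)"

definition vec3 :: "real \<Rightarrow> real \<Rightarrow> real \<Rightarrow> real^3" where
  "vec3 a b c = vector [a, b, c]"

definition nvec :: "real \<Rightarrow> real \<Rightarrow> real^3" where
  "nvec \<theta> \<phi> = vec3 (sin \<theta> * cos \<phi>) (sin \<theta> * sin \<phi>) (cos \<theta>)"
definition mvec :: "real \<Rightarrow> real \<Rightarrow> real^3" where
  "mvec \<theta> \<phi> = vec3 (cos \<theta> * cos \<phi>) (cos \<theta> * sin \<phi>) (- sin \<theta>)"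
definition pvec :: "real \<Rightarrow> real \<Rightarrow> real^3" where
  "pvec \<theta> \<phi> = vec3 (- sin \<phi>) (cos \<phi>) 0"

definition Emat :: "real \<Rightarrow> real \<Rightarrow> mat3" where
  "Emat \<theta> \<phi> = outer (nvec \<theta> \<phi>) (nvec \<theta> \<phi>) - (1/3) *\<^sub>R mat 1"
definition Fmat :: "real \<Rightarrow> real \<Rightarrow> mat3" where
  "Fmat \<theta> \<phi> = outer (nvec \<theta> \<phi>) (mvec \<theta> \<phi>) + outer (mvec \<theta> \<phi>) (nvec \<theta> \<phi>)"
definition Gmat :: "real \<Rightarrow> real \<Rightarrow> mat3" where
  "Gmat \<theta> \<phi> = outer (nvec \<theta> \<phi>) (pvec \<theta> \<phi>) + outer (pvec \<theta> \<phi>) (nvec \<theta> \<phi>)"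
definition Xmat :: "real \<Rightarrow> real \<Rightarrow> mat3" where
  "Xmat \<theta> \<phi> = outer (mvec \<theta> \<phi>) (pvec \<theta> \<phi>) + outer (pvec \<theta> \<phi>) (mvec \<theta> \<phi>)"
definition Ymat :: "real \<Rightarrow> real \<Rightarrow> mat3" where
  "Ymat \<theta> \<phi> = outer (mvec \<theta> \<phi>) (mvec \<theta> \<phi>) - outer (pvec \<theta> \<phi>) (pvec \<theta> \<phi>)"

text \<open>H(x) at x = r n(theta,phi), r = |x|: sqrt(3/2) h(r) (xhat xhat - I/3).\<close>
definition Hmat :: "(real \<Rightarrow> real) \<Rightarrow> real \<Rightarrow> real \<Rightarrow> real \<Rightarrow> mat3" where
  "Hmat h r \<theta> \<phi> = (sqrt (3/2) * h r) *\<^sub>R Emat \<theta> \<phi>"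

definition phi_fun :: "mat3 \<Rightarrow> mat3 \<Rightarrow> real \<Rightarrow> real \<Rightarrow> real \<Rightarrow> real" where
  "phi_fun H V v0 v3 v4 =
     2/5 * v0^2 + v3^2 + v4^2 - sqrt 6 / 2 * trace (V ** V ** V)
     + 3/8 * (mdot V V)^2 + 5 * (2 * mdot H V + mdot V V)^2"

end

theory Submission
  imports Defs
begin

definition Um :: "real \<Rightarrow> real \<Rightarrow> mat3" where
  "Um \<theta> \<phi> = (\<chi> i j. (if j = 1 then mvec \<theta> \<phi> else if j = 2 then pvec \<theta> \<phi> else nvec \<theta> \<phi>) $ i)"

lemma trig: "sin \<theta> ^2 + cos \<theta> ^2 = 1" "sin \<phi> ^2 + cos \<phi> ^2 = 1" for \<theta> \<phi> :: real by simp_all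

lemma UtU: "transpose (Um \<theta> \<phi>) ** Um \<theta> \<phi> = mat 1"
  unfolding vec_eq_iff forall_3 Um_def matrix_matrix_mult_def transpose_def mat_def

  apply (simp add: sum_3 mvec_def pvec_def nvec_def vec3_def)
  apply (intro conjI; insert trig(1)[of \<theta>] trig(2)[of \<phi>]; algebra)
  done

lemma UUt: "Um \<theta> \<phi> ** transpose (Um \<theta> \<phi>) = mat 1"
  unfolding vec_eq_iff forall_3 Um_def matrix_matrix_mult_def transpose_def mat_def

  apply (simp add: sum_3 mvec_def pvec_def nvec_def vec3_def)
  apply (intro conjI; insert trig(1)[of \<theta>] trig(2)[of \<phi>]; algebra)
  done

definition Dm :: "real \<Rightarrow> real \<Rightarrow> real \<Rightarrow> real \<Rightarrow> real \<Rightarrow> mat3" where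
  "Dm v0 v1 v2 v3 v4 = (\<chi> i j. if i = 1 \<and> j = 1 then -v0/3+v4 else if i = 2 \<and> j = 2 then -v0/3-v4
     else if i = 3 \<and> j = 3 then 2 * v0/3 else if (i = 1 \<and> j = 2) \<or> (i = 2 \<and> j = 1) then v3
     else if (i = 1 \<and> j = 3) \<or> (i = 3 \<and> j = 1) then v1 else v2)"

lemma Vconj: "v0 *\<^sub>R Emat \<theta> \<phi> + v1 *\<^sub>R Fmat \<theta> \<phi> + v2 *\<^sub>R Gmat \<theta> \<phi>
              + v3 *\<^sub>R Xmat \<theta> \<phi> + v4 *\<^sub>R Ymat \<theta> \<phi> = Um \<theta> \<phi> ** Dm v0 v1 v2 v3 v4 ** transpose (Um \<theta> \<phi>)"
  unfolding vec_eq_iff forall_3 Um_def matrix_matrix_mult_def transpose_def mat_def Dm_def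
    Emat_def Fmat_def Gmat_def Xmat_def Ymat_def outer_def
  apply (simp add: sum_3 mvec_def pvec_def nvec_def vec3_def)
  apply (intro conjI; insert trig(1)[of \<theta>] trig(2)[of \<phi>]; ((simp add: field_simps; fail) | algebra))
  done

lemma mdot_trace: "mdot A B = trace (transpose A ** B)"
  unfolding mdot_def trace_def matrix_matrix_mult_def transpose_def
  by (simp add: sum_3)

lemma conj_mult: "(Um \<theta> \<phi> ** A ** transpose (Um \<theta> \<phi>)) ** (Um \<theta> \<phi> ** B ** transpose (Um \<theta> \<phi>))
   = Um \<theta> \<phi> ** (A ** B) ** transpose (Um \<theta> \<phi>)"
  by (simp add: matrix_mul_assoc UtU[unfolded matrix_mul_assoc] flip: matrix_mul_assoc)
    (metis UtU matrix_mul_assoc matrix_mul_lid)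

lemma conj_trace: "trace (Um \<theta> \<phi> ** A ** transpose (Um \<theta> \<phi>)) = trace A"
  by (metis UtU matrix_mul_assoc matrix_mul_lid trace_mul_sym)

lemma conj_transpose: "transpose (Um \<theta> \<phi> ** A ** transpose (Um \<theta> \<phi>)) = Um \<theta> \<phi> ** transpose A ** transpose (Um \<theta> \<phi>)"
  by (simp add: matrix_transpose_mul matrix_mul_assoc)

lemma conj_mdot: "mdot (Um \<theta> \<phi> ** A ** transpose (Um \<theta> \<phi>)) (Um \<theta> \<phi> ** B ** transpose (Um \<theta> \<phi>)) = mdot A B"
  by (simp add: mdot_trace conj_transpose conj_mult conj_trace)

lemma trD3: "trace (Dm v0 v1 v2 v3 v4 ** Dm v0 v1 v2 v3 v4 ** Dm v0 v1 v2 v3 v4) =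
   2/9 * v0^3 - 2 * v0 * v4^2 - 2 * v0 * v3^2 + (v0 + 3 * v4) * v1^2 + (v0 - 3 * v4) * v2^2 + 6 * v1 * v2 * v3"
  unfolding trace_def matrix_matrix_mult_def Dm_def
  by (simp add: sum_3 field_simps power3_eq_cube power2_eq_square)

lemma mdotDD: "mdot (Dm v0 v1 v2 v3 v4) (Dm v0 v1 v2 v3 v4) = 2/3 * v0^2 + 2 * (v1^2 + v2^2 + v3^2 + v4^2)"
  unfolding mdot_def Dm_def
  by (simp add: sum_3 field_simps power2_eq_square)

lemma mdotED: "mdot (Dm 1 0 0 0 0) (Dm v0 v1 v2 v3 v4) = 2/3 * v0"
  unfolding mdot_def Dm_def
  by (simp add: sum_3 field_simps)

lemma Emat_conj: "Emat \<theta> \<phi> = Um \<theta> \<phi> ** Dm 1 0 0 0 0 ** transpose (Um \<theta> \<phi>)"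
  using Vconj[of 1 \<theta> \<phi> 0 0 0 0] by simp

lemma Dm_zero: "Dm v0 v1 v2 v3 v4 = 0 \<longleftrightarrow> v0 = 0 \<and> v1 = 0 \<and> v2 = 0 \<and> v3 = 0 \<and> v4 = 0"
proof
  assume h: "Dm v0 v1 v2 v3 v4 = 0"
  have "Dm v0 v1 v2 v3 v4 $ 3 $ 3 = 0" "Dm v0 v1 v2 v3 v4 $ 1 $ 1 = 0" "Dm v0 v1 v2 v3 v4 $ 1 $ 3 = 0"
     "Dm v0 v1 v2 v3 v4 $ 2 $ 3 = 0" "Dm v0 v1 v2 v3 v4 $ 1 $ 2 = 0" using h by simp_all
  then show "v0 = 0 \<and> v1 = 0 \<and> v2 = 0 \<and> v3 = 0 \<and> v4 = 0" unfolding Dm_def by simp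
next
  assume "v0 = 0 \<and> v1 = 0 \<and> v2 = 0 \<and> v3 = 0 \<and> v4 = 0"
  then show "Dm v0 v1 v2 v3 v4 = 0" unfolding Dm_def vec_eq_iff by simp
qed

lemma conj_zero: "Um \<theta> \<phi> ** A ** transpose (Um \<theta> \<phi>) = 0 \<longleftrightarrow> A = 0"
proof
  assume "Um \<theta> \<phi> ** A ** transpose (Um \<theta> \<phi>) = 0"
  then have "transpose (Um \<theta> \<phi>) ** (Um \<theta> \<phi> ** A ** transpose (Um \<theta> \<phi>)) ** Um \<theta> \<phi> = 0" by simp
  then show "A = 0" by (metis UtU UUt matrix_mul_assoc matrix_mul_lid matrix_mul_rid)
qed simp

definition psi :: "real \<Rightarrow> real" where "psi y = (if y \<le> 1 then y else 2 - 1/y)"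
definition dpsi :: "real \<Rightarrow> real" where "dpsi y = (if y \<le> 1 then 1 else 1/y^2)"

lemma psi_deriv: "(psi has_real_derivative dpsi y) (at y)"
proof -
  have "((\<lambda>x. if x \<in> {..1} then x else 2 - 1/x) has_vector_derivative
      (if y \<in> {..1} then 1 else 1/y^2)) (at y within UNIV)"
  proof (rule has_vector_derivative_If_within_closures[where T = "{1<..}"])
    show "y \<in> {..1} \<union> {1<..}" by auto
    show "UNIV = {..1::real} \<union> {1<..}" by auto
    show "((\<lambda>x. x) has_vector_derivative 1) (at y within {..1} \<union> closure {..1} \<inter> closure {1<..})"
      by (rule has_vector_derivative_id)
    assume "y \<in> {1<..} \<union> closure {..1} \<inter> closure {1<..}"
    then have y: "y \<ge> 1" by auto
    have "((\<lambda>x. 2 - 1/x) has_real_derivative 1/y^2) (at y)"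
      using y by (auto intro!: derivative_eq_intros simp: power2_eq_square)
    then show "((\<lambda>x. 2 - 1/x) has_vector_derivative 1/y^2) (at y within {1<..} \<union> closure {..1} \<inter> closure {1<..})"
      by (simp add: has_real_derivative_iff_has_vector_derivative has_vector_derivative_at_within)
  next
    show "y \<in> closure {..1} \<Longrightarrow> y \<in> closure {1<..} \<Longrightarrow> y = 2 - 1 / y" by simp
    show "y \<in> closure {..1} \<Longrightarrow> y \<in> closure {1<..} \<Longrightarrow> 1 = 1 / y\<^sup>2" by simp
  qed
  then show ?thesis
    by (simp add: psi_def[abs_def] dpsi_def has_real_derivative_iff_has_vector_derivative atMost_iff)
qed

lemma dpsi_eq: "dpsi y = 1 / (max y 1)^2"
  by (simp add: dpsi_def max_def)

lemma dpsi_cont: "continuous_on UNIV dpsi"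
proof -
  have "continuous_on UNIV (\<lambda>y::real. 1 / (max y 1)^2)"
    by (intro continuous_intros) (auto simp: max_def)
  then show ?thesis by (simp add: dpsi_eq[abs_def])
qed

lemma dpsi_sq: "(dpsi y)^2 \<le> 1"
proof (cases "y \<le> 1")
  case False
  then have "1/y^2 \<le> 1" by (simp add: power_le_one_iff field_simps)
  moreover have "1/y^2 \<ge> 0" by simp
  ultimately have "(1/y^2)^2 \<le> 1" by (simp add: power_le_one)
  then show ?thesis using False by (simp add: dpsi_def)
qed (simp add: dpsi_def)


lemma psi_props: assumes y: "y > 1" shows "1 < psi y \<and> psi y < y"
proof -
  have "1/y < 1" using y by simp
  moreover have "(y-1)^2 > 0" using y by simp
  then have "2*y - 1 < y*y" by (simp add: power2_eq_square algebra_simps)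
  then have "2 - 1/y < y" using y by (simp add: field_simps)
  ultimately show ?thesis using y by (simp add: psi_def)
qed

lemma quart_mono: "1 \<le> (a::real) \<Longrightarrow> a \<le> b \<Longrightarrow> 3*a^4-4*a^3 \<le> 3*b^4-4*b^3"
proof -
  assume a: "1 \<le> a" and ab: "a \<le> b"
  have eq: "3*b^4-4*b^3 - (3*a^4-4*a^3) = (b-a)*(3*(b^3+b^2*a+b*a^2+a^3) - 4*(b^2+a*b+a^2))"
    by (simp add: algebra_simps power2_eq_square power3_eq_cube power4_eq_xxxx)
  have b1: "1 \<le> b" using a ab by simp
  have f1: "b^3 \<ge> b^2" using b1 by (simp add: power2_eq_square power3_eq_cube)
  have f2: "b^2*a \<ge> b^2" using a by (simp add: mult_le_cancel_left1)
  have f3: "b^2 \<ge> a*b" using ab b1 by (simp add: power2_eq_square mult_right_mono)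
  have f4: "b*a^2 \<ge> a*b" using a b1 by (simp add: power2_eq_square mult_le_cancel_left1)
  have f5: "a*b \<ge> a^2" using a ab by (simp add: power2_eq_square mult_left_mono)
  have f6: "a^3 \<ge> a^2" using a by (simp add: power2_eq_square power3_eq_cube)
  have "3*(b^3+b^2*a+b*a^2+a^3) - 4*(b^2+a*b+a^2) = 3*b^3+3*(b^2*a)+3*(b*a^2)+3*a^3 - 4*b^2-4*(a*b)-4*a^2" by simp
  also have "\<dots> \<ge> 0" using f1 f2 f3 f4 f5 f6 by linarith
  finally have "3*(b^3+b^2*a+b*a^2+a^3) - 4*(b^2+a*b+a^2) \<ge> 0" .
  moreover have "b - a \<ge> 0" using ab by simp
  ultimately have "(b-a)*(3*(b^3+b^2*a+b*a^2+a^3) - 4*(b^2+a*b+a^2)) \<ge> 0" by simp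
  then show ?thesis using eq by linarith
qed

definition Wf :: "real \<Rightarrow> real \<Rightarrow> real \<Rightarrow> real" where
  "Wf t x y = 3 * y^2 + x^2 * (t / 8 * (1 - y^2)^2 + hplus t / 8 * (1 + 3 * y^4 - 4 * y^3))"

lemma Wf_mono: assumes "t \<ge> 0" "1 \<le> a" "a < b" shows "Wf t x a < Wf t x b"
proof -
  have hp: "hplus t \<ge> 0" using assms(1) unfolding hplus_def by simp
  have 1: "3*a^2 < 3*b^2" using assms by (simp add: power_strict_mono)
  have "a^2 \<le> b^2" using assms by (simp add: power_mono)
  moreover have "1 \<le> a^2" using assms by (simp add: one_le_power)
  ultimately have "(a^2-1)^2 \<le> (b^2-1)^2" by (intro power_mono) auto
  then have "(1-a^2)^2 \<le> (1-b^2)^2" by (simp add: power2_commute)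
  then have 2: "t/8*(1-a^2)^2 \<le> t/8*(1-b^2)^2" using assms by (simp add: mult_left_mono)
  have "1 + 3*a^4-4*a^3 \<le> 1+3*b^4-4*b^3" using quart_mono[of a b] assms by simp
  then have 3: "hplus t/8*(1 + 3*a^4-4*a^3) \<le> hplus t/8*(1+3*b^4-4*b^3)" using hp by (simp add: mult_left_mono)
  have "x^2 * (t / 8 * (1 - a^2)^2 + hplus t / 8 * (1 + 3 * a^4 - 4 * a^3)) \<le>
        x^2 * (t / 8 * (1 - b^2)^2 + hplus t / 8 * (1 + 3 * b^4 - 4 * b^3))"
    using 2 3 by (intro mult_left_mono) auto
  then show ?thesis using 1 unfolding Wf_def by linarith
qed

lemma density_eq: "energy_density t h x = x^2/2 * (deriv h x)^2 + Wf t x (h x)"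
  unfolding energy_density_def Wf_def by simp


lemma h_le1:
  assumes t: "t \<ge> 0" and mn: "is_minimizer t R h" and R: "R > 1"
  shows "\<forall>r\<in>{1..R}. h r \<le> 1"
proof (rule ccontr)
  assume "\<not> ?thesis"
  then obtain r0 where r0: "r0 \<in> {1..R}" "h r0 > 1" by (auto simp: not_le)
  from mn have adm: "admissible R h" and mini: "\<And>g. admissible R g \<Longrightarrow> energy t R h \<le> energy t R g"
    unfolding is_minimizer_def by auto
  from adm have h1: "h 1 = 1" "h R = 1" and hC: "h C1_differentiable_on {1..R}"
    unfolding admissible_def by auto
  from hC obtain D where hD': "\<forall>x\<in>{1..R}. (h has_vector_derivative D x) (at x)"
     and Dc: "continuous_on {1..R} D"
    unfolding C1_differentiable_on_def by blast
  have hD: "\<And>x. x\<in>{1..R} \<Longrightarrow> (h has_real_derivative D x) (at x)"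
    using hD' by (simp add: has_real_derivative_iff_has_vector_derivative)
  have hc: "continuous_on {1..R} h" using hD
    by (meson DERIV_isCont continuous_at_imp_continuous_on)
  define g where "g = (\<lambda>x. psi (h x))"
  define Dg where "Dg = (\<lambda>x. dpsi (h x) * D x)"
  have gD: "\<And>x. x\<in>{1..R} \<Longrightarrow> (g has_real_derivative Dg x) (at x)"
    unfolding g_def Dg_def using hD psi_deriv by (auto intro: DERIV_chain2)
  have gc: "continuous_on {1..R} g" using gD
    by (meson DERIV_isCont continuous_at_imp_continuous_on)
  have Dgc: "continuous_on {1..R} Dg" unfolding Dg_def
    by (intro continuous_intros Dc continuous_on_compose2[OF dpsi_cont hc]) auto
  have psi1: "psi 1 = 1" by (simp add: psi_def)
  have "g C1_differentiable_on {1..R}" unfolding C1_differentiable_on_def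
    using gD Dgc by (intro exI[of _ Dg]) (auto simp: has_real_derivative_iff_has_vector_derivative)
  then have admg: "admissible R g" unfolding admissible_def
    using h1 psi1 by (auto simp: g_def)
  define fh where "fh = (\<lambda>x. x^2/2 * (D x)^2 + Wf t x (h x))"
  define fg where "fg = (\<lambda>x. x^2/2 * (Dg x)^2 + Wf t x (g x))"
  have eh: "energy t R h = integral {1..R} fh"
    unfolding energy_def by (rule integral_cong) (simp add: density_eq fh_def DERIV_imp_deriv[OF hD])
  have eg: "energy t R g = integral {1..R} fg"
    unfolding energy_def by (rule integral_cong) (simp add: density_eq fg_def DERIV_imp_deriv[OF gD])
  have fhc: "continuous_on {1..R} fh" unfolding fh_def Wf_def by (intro continuous_intros Dc hc) auto
  have fgc: "continuous_on {1..R} fg" unfolding fg_def Wf_def by (intro continuous_intros Dgc gc) auto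
  have Dle: "(Dg x)^2 \<le> (D x)^2" for x
  proof -
    have "(Dg x)^2 = (dpsi (h x))^2 * (D x)^2" by (simp add: Dg_def power_mult_distrib)
    also have "\<dots> \<le> 1 * (D x)^2" by (intro mult_right_mono dpsi_sq) auto
    finally show ?thesis by simp
  qed
  have le: "fg x \<le> fh x" for x
  proof -
    have "Wf t x (g x) \<le> Wf t x (h x)"
    proof (cases "h x \<le> 1")
      case True then show ?thesis by (simp add: g_def psi_def)
    next
      case False
      then have "1 < g x" "g x < h x" using psi_props[of "h x"] by (auto simp: g_def)
      then show ?thesis using Wf_mono[OF t, of "g x" "h x" x] by simp
    qed
    moreover have "x^2/2 * (Dg x)^2 \<le> x^2/2 * (D x)^2" by (intro mult_left_mono Dle) auto
    ultimately show ?thesis unfolding fh_def fg_def by simp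
  qed
  have lt: "fg r0 < fh r0"
  proof -
    have "1 < g r0" "g r0 < h r0" using psi_props[of "h r0"] r0 by (auto simp: g_def)
    then have "Wf t r0 (g r0) < Wf t r0 (h r0)" using Wf_mono[OF t, of "g r0" "h r0" r0] by simp
    moreover have "r0^2/2 * (Dg r0)^2 \<le> r0^2/2 * (D r0)^2" by (intro mult_left_mono Dle) auto
    ultimately show ?thesis unfolding fh_def fg_def by simp
  qed
  define f where "f = (\<lambda>x. fh x - fg x)"
  have fc: "continuous_on {1..R} f" unfolding f_def by (intro continuous_intros fhc fgc)
  have f0: "\<And>x. x \<in> {1..R} \<Longrightarrow> f x \<ge> 0" using le by (simp add: f_def)
  have "integral {1..R} f \<noteq> 0"
    using integral_eq_0_iff[OF fc R f0] r0 lt by (auto simp: f_def)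
  moreover have "integral {1..R} f \<ge> 0"
    using integral_nonneg[OF integrable_continuous_interval[OF fc] f0] by simp
  moreover have "integral {1..R} f = integral {1..R} fh - integral {1..R} fg"
    unfolding f_def
    by (rule integral_diff[OF integrable_continuous_interval[OF fhc] integrable_continuous_interval[OF fgc]])
  ultimately have "energy t R g < energy t R h" using eh eg by simp
  with mini[OF admg] show False by simp
qed

lemma cs_ineq: "\<bar>v4 * (v1^2-v2^2) + 2 * v1 * v2 * v3\<bar> \<le> sqrt (v3^2+v4^2) * (v1^2+v2^2)"
proof -
  have "(v4 * (v1^2-v2^2) + 2 * v1 * v2 * v3)^2 \<le> (v3^2+v4^2) * (v1^2+v2^2)^2"
  proof -
    have "(v3^2+v4^2) * (v1^2+v2^2)^2 - (v4 * (v1^2-v2^2) + 2 * v1 * v2 * v3)^2 = (v3 * (v1^2-v2^2) - 2 * v1 * v2 * v4)^2"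
      by (simp add: algebra_simps power2_eq_square)
    moreover have "0 \<le> (v3 * (v1^2-v2^2) - 2 * v1 * v2 * v4)^2" by simp
    ultimately show ?thesis by linarith
  qed
  then have "sqrt ((v4 * (v1^2-v2^2) + 2 * v1 * v2 * v3)^2) \<le> sqrt ((v3^2+v4^2) * (v1^2+v2^2)^2)"
    by (rule real_sqrt_le_mono)
  then show ?thesis by (simp add: real_sqrt_mult)
qed

lemma sqrt6: "sqrt 6 * sqrt 6 = (6::real)" by simp
lemma sqrt32: "sqrt (3/2) = sqrt 6 / (2::real)"
proof (rule real_sqrt_unique)
  show "(sqrt 6 / 2)^2 = (3/2::real)" by (simp add: power_divide)
  show "0 \<le> sqrt 6 / (2::real)" by simp
qed

lemma t1: assumes kk: "k * k = (6::real)" and v0: "v0 = k * u" and w: "v3^2+v4^2 = 6 * r^2" shows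
  "k / 2 * (2 / 9 * v0 ^ 3 - 2 * v0 * v4\<^sup>2 - 2 * v0 * v3\<^sup>2 + (v0 + 3 * v4) * v1\<^sup>2 + (v0 - 3 * v4) * v2\<^sup>2 + 6 * v1 * v2 * v3)
  = 4 * u^3 - 36 * u * r^2 + 3 * u * (v1^2+v2^2) + 3 * k/2 * (v4 * (v1^2-v2^2) + 2 *  v1 *  v2 *  v3)"
proof -
  have "k / 2 * (2 / 9 * v0 ^ 3 - 2 * v0 * v4\<^sup>2 - 2 * v0 * v3\<^sup>2 + (v0 + 3 * v4) * v1\<^sup>2 + (v0 - 3 * v4) * v2\<^sup>2 + 6 * v1 * v2 * v3)
    = (k * k) * (k * k) / 9 * u^3 - (k * k) * u * (v3^2+v4^2) + (k * k)/2 * u * (v1^2+v2^2) + 3 * k/2 * (v4 * (v1^2-v2^2) + 2 *  v1 *  v2 *  v3)"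
    unfolding v0 by (simp add: algebra_simps power3_eq_cube power2_eq_square)
  also have "\<dots> = 4 * u^3 - 36 * u * r^2 + 3 * u * (v1^2+v2^2) + 3 * k/2 * (v4 * (v1^2-v2^2) + 2 *  v1 *  v2 *  v3)"
    unfolding kk w by simp
  finally show ?thesis .
qed
lemma t2: assumes kk: "k * k = (6::real)" and v0: "v0 = k * u" and w: "v3^2+v4^2 = 6 * r^2" shows
  "2 / 3 * v0\<^sup>2 + 2 * (v1\<^sup>2 + v2\<^sup>2 + v3\<^sup>2 + v4\<^sup>2) = 4 * u^2 + 2 * (v1^2+v2^2) + 12 * r^2"
proof -
  have "2 / 3 * v0\<^sup>2 + 2 * (v1\<^sup>2 + v2\<^sup>2 + v3\<^sup>2 + v4\<^sup>2) = 2/3 * (k * k) * u^2 + 2 * (v1^2+v2^2) + 2 * (v3^2+v4^2)"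
    unfolding v0 by (simp add: algebra_simps power2_eq_square)
  then show ?thesis unfolding kk w by simp
qed
lemma t3: assumes kk: "k * k = (6::real)" and v0: "v0 = k * u" shows "2 * (k / 2 * s * (2 / 3 * v0)) = 4 * s * u"
proof -
  have "2 * (k / 2 * s * (2 / 3 * v0)) = 2/3 * (k * k) * s * u" unfolding v0 by (simp add: algebra_simps)
  then show ?thesis unfolding kk by simp
qed
lemma t4: assumes kk: "k * k = (6::real)" and v0: "v0 = k * u" shows "2/5 * v0^2 = 12/5 * u^2"
proof -
  have "2/5 * v0^2 = 2/5 * (k * k) * u^2" unfolding v0 by (simp add: algebra_simps power2_eq_square)
  then show ?thesis unfolding kk by simp
qed
lemma phi_poly:
  fixes s v0 v1 v2 v3 v4 :: real
  defines "k \<equiv> sqrt 6"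
  defines "u \<equiv> v0 / k" and "r \<equiv> sqrt (v3^2+v4^2) / k" and "\<rho> \<equiv> v1^2+v2^2"
  shows "2/5 * v0^2 + v3^2 + v4^2 - k / 2 * (2/9 * v0^3 - 2 * v0 * v4^2 - 2 * v0 * v3^2 + (v0 + 3 * v4) * v1^2 + (v0 - 3 * v4) * v2^2 + 6 * v1 * v2 * v3)
     + 3/8 * (2/3 * v0^2 + 2 * (v1^2 + v2^2 + v3^2 + v4^2))^2
     + 5 * (2 * (sqrt (3/2) * s * (2/3 * v0)) + (2/3 * v0^2 + 2 * (v1^2 + v2^2 + v3^2 + v4^2)))^2
   = (12/5 * u^2+6 * r^2-4 * u^3+36 * u * r^2-3 * u * \<rho>-9 * r * \<rho>+3/8 * (4 * u^2+2 * \<rho>+12 * r^2)^2+5 * (4 * s * u+(4 * u^2+2 * \<rho>+12 * r^2))^2)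
     + (9 * r * \<rho> - 3 * k/2 * (v4 * (v1^2-v2^2) + 2 * v1 * v2 * v3))"
proof -
  have kk: "k * k = 6" by (simp add: k_def)
  have k0: "k \<noteq> 0" by (simp add: k_def)
  have v0: "v0 = k * u" using k0 by (simp add: u_def)
  have w: "v3^2+v4^2 = 6 * r^2"
  proof -
    have "r * k = sqrt (v3^2+v4^2)" using k0 by (simp add: r_def)
    then have "(r * k)^2 = v3^2+v4^2" by simp
    moreover have "(r * k)^2 = r^2 * (k * k)" by (simp add: power2_eq_square)
    ultimately show ?thesis using kk by simp
  qed
  have s32: "sqrt (3/2) = k/2" by (simp add: sqrt32 k_def)
  let ?T = "2 / 9 * v0 ^ 3 - 2 * v0 * v4\<^sup>2 - 2 * v0 * v3\<^sup>2 + (v0 + 3 * v4) * v1\<^sup>2 + (v0 - 3 * v4) * v2\<^sup>2 + 6 * v1 * v2 * v3"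
  let ?N = "2 / 3 * v0\<^sup>2 + 2 * (v1\<^sup>2 + v2\<^sup>2 + v3\<^sup>2 + v4\<^sup>2)"
  have "2/5 * v0^2 + v3^2 + v4^2 - k / 2 * ?T + 3/8 * ?N^2 + 5 * (2 * (sqrt (3/2) * s * (2/3 * v0)) + ?N)^2
     = 2/5 * v0^2 + (v3^2 + v4^2) - k / 2 * ?T + 3/8 * ?N^2 + 5 * (2 * (k / 2 * s * (2/3 * v0)) + ?N)^2"
    by (simp add: s32)
  also have "\<dots> = 12/5 * u^2 + 6 * r^2 - (4 * u^3 - 36 * u * r^2 + 3 * u * (v1^2+v2^2) + 3 * k/2 * (v4 * (v1^2-v2^2) + 2 *  v1 *  v2 *  v3))
     + 3/8 * (4 * u^2 + 2 * (v1^2+v2^2) + 12 * r^2)^2 + 5 * (4 * s * u + (4 * u^2 + 2 * (v1^2+v2^2) + 12 * r^2))^2"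
    unfolding t1[OF kk v0 w] t2[OF kk v0 w] t3[OF kk v0] t4[OF kk v0] w ..
  also have "\<dots> = (12/5 * u^2+6 * r^2-4 * u^3+36 * u * r^2-3 * u * \<rho>-9 * r * \<rho>+3/8 * (4 * u^2+2 * \<rho>+12 * r^2)^2+5 * (4 * s * u+(4 * u^2+2 * \<rho>+12 * r^2))^2)
     + (9 * r * \<rho> - 3 * k/2 * (v4 * (v1^2-v2^2) + 2 *  v1 *  v2 *  v3))"
    unfolding \<rho>_def by (simp add: algebra_simps)
  finally show ?thesis .
qed

lemma caseB:
  fixes x r \<rho> :: real
  assumes "x \<ge> 0" "r \<ge> 0" "\<rho> \<ge> 0"
  shows "12/5*x^2+6*r^2+4*x^3-36*x*r^2+3*x*\<rho>-9*r*\<rho>+3/8*(4*x^2+2*\<rho>+12*r^2)^2+5*(4*x^2+2*\<rho>+12*r^2-4*x)^2 - 1/20*(x^2+r^2+\<rho>^2) \<ge> 0"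
proof -
  have eq: "12/5*x^2+6*r^2+4*x^3-36*x*r^2+3*x*\<rho>-9*r*\<rho>+3/8*(4*x^2+2*\<rho>+12*r^2)^2+5*(4*x^2+2*\<rho>+12*r^2-4*x)^2 - 1/20*(x^2+r^2+\<rho>^2) =
    (429/20) * (1 * \<rho> + (-30/143) * r + (19674649/3575000) * r^2 + (-70/39) * x + (1144023/572000) * x^2)^2 +
    (14317/2860) * (1 * r + (3541436677/715850000) * r^2 + (-23100/14317) * x + (-159493477/143170000) * x * r + (38789747/357925000) * x^2)^2 +
    (185197/859020) * ((-5020983027/1851970000) * r^2 + 1 * x + (-23199708183/9259850000) * x * r + (-211531689/370394000) * x^2)^2 +
    (1076281657868327/4629925000000000) * (1 * r^2 + (887229348339830/1076281657868327) * x * r + (202367625831547/1076281657868327) * x^2)^2 +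
    (805927767029276262914574763/26907041446708175000000000) * (1 * x * r + (11135580122861434234317895/1611855534058552525829149526) * x^2)^2 +
    (9315202892629802169482450650332449319/161185553405855252582914952600000000000) * (1 * x^2)^2 +
    (5476053/250000) * (1 * r^2 * \<rho>) +
    (1/500000) * (1 * r^3) +
    (7931/40000) * (1 * x^2 * \<rho>) +
    (51865707/1000000) * (1 * x * r^3) +
    (3/1000000) * (1 * x^2 * r^2) +
    (10587/100000) * (1 * x^3 * r)"
    by (simp add: algebra_simps power2_eq_square power3_eq_cube power4_eq_xxxx; simp add: field_simps)
  have "0 \<le> (429/20) * (1 * \<rho> + (-30/143) * r + (19674649/3575000) * r^2 + (-70/39) * x + (1144023/572000) * x^2)^2 +
    (14317/2860) * (1 * r + (3541436677/715850000) * r^2 + (-23100/14317) * x + (-159493477/143170000) * x * r + (38789747/357925000) * x^2)^2 +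
    (185197/859020) * ((-5020983027/1851970000) * r^2 + 1 * x + (-23199708183/9259850000) * x * r + (-211531689/370394000) * x^2)^2 +
    (1076281657868327/4629925000000000) * (1 * r^2 + (887229348339830/1076281657868327) * x * r + (202367625831547/1076281657868327) * x^2)^2 +
    (805927767029276262914574763/26907041446708175000000000) * (1 * x * r + (11135580122861434234317895/1611855534058552525829149526) * x^2)^2 +
    (9315202892629802169482450650332449319/161185553405855252582914952600000000000) * (1 * x^2)^2 +
    (5476053/250000) * (1 * r^2 * \<rho>) +
    (1/500000) * (1 * r^3) +
    (7931/40000) * (1 * x^2 * \<rho>) +
    (51865707/1000000) * (1 * x * r^3) +
    (3/1000000) * (1 * x^2 * r^2) +
    (10587/100000) * (1 * x^3 * r)"
    using assms by (intro add_nonneg_nonneg mult_nonneg_nonneg; simp)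
  then show ?thesis unfolding eq .
qed

lemma caseA:
  fixes x r \<rho> :: real
  assumes "x \<ge> 0" "r \<ge> 0" "\<rho> \<ge> 0" "4*x - (4*x^2+2*\<rho>+12*r^2) \<ge> 0"
  shows "12/5*x^2+6*r^2+4*x^3-36*x*r^2+3*x*\<rho>-9*r*\<rho>+3/8*(4*x^2+2*\<rho>+12*r^2)^2 - 1/20*(x^2+r^2+\<rho>^2) \<ge> 0"
proof -
  have eq: "12/5*x^2+6*r^2+4*x^3-36*x*r^2+3*x*\<rho>-9*r*\<rho>+3/8*(4*x^2+2*\<rho>+12*r^2)^2 - 1/20*(x^2+r^2+\<rho>^2) =
    (99807/25000) * (1 * \<rho> + (-4499867/3992280) * r + (299047/234840) * r^2 + (-26057/99807) * x + (6002077/3992280) * x * r + (876868/499035) * x^2)^2 +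
    (3505262982311/3992280000000) * (1 * r + (22879605194173/3505262982311) * r^2 + (-4691183323240/3505262982311) * x + (-594654576841/3505262982311) * x * r + (-1840213710512/3505262982311) * x^2)^2 +
    (35422087418013/70105259646220) * ((-7704359292198907693/1771104370900650000) * r^2 + 1 * x + (-993946069201578859/221388046362581250) * x * r + (-73481398922030083/221388046362581250) * x^2)^2 +
    (2148840957019768063313041/1771104370900650000000000) * (1 * r^2 + (2118034186143420073235864/2148840957019768063313041) * x * r + (156578550088923939587768/2148840957019768063313041) * x^2)^2 +
    (24298433775401522618199289837109/1074420478509884031656520500000) * (1 * x * r + (2318478430881086371534328906959/97193735101606090472797159348436) * x^2)^2 +
    (4717863677127446837759190541542910499/38877494040642436189118863739374400000) * (1 * x^2)^2 +
    (4*x - (4*x^2+2*\<rho>+12*r^2)) * ((437893/500000) * (1 * x)^2) +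
    (4*x - (4*x^2+2*\<rho>+12*r^2)) * ((54613/1000000) * (1 * r)^2) +
    (4*x - (4*x^2+2*\<rho>+12*r^2)) * ((54613/1000000) * (1 * \<rho>)^2) +
    (54613/500000) * (1 * \<rho>^3) +
    (5798827/250000) * (1 * r^2 * \<rho>) +
    (163839/250000) * (1 * r^2 * \<rho>^2) +
    (163839/125000) * (1 * x * r^2 * \<rho>) +
    (18277829/500000) * (1 * x * r^3) +
    (54613/250000) * (1 * x^2 * \<rho>^2) +
    (54613/125000) * (1 * x^3 * \<rho>) +
    (1/1000000) * (1 * x^3 * r) +
    (63557/50000) * ((4*x - (4*x^2+2*\<rho>+12*r^2)) * \<rho>) +
    (133/1000000) * ((4*x - (4*x^2+2*\<rho>+12*r^2)) * r) +
    (54613/500000) * ((4*x - (4*x^2+2*\<rho>+12*r^2)) * x * \<rho>) +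
    (6002077/1000000) * ((4*x - (4*x^2+2*\<rho>+12*r^2)) * x * r) +
    (81533/100000) * ((4*x - (4*x^2+2*\<rho>+12*r^2)) * x^2)"
    by (simp add: algebra_simps power2_eq_square power3_eq_cube power4_eq_xxxx; simp add: field_simps)
  have "0 \<le> (99807/25000) * (1 * \<rho> + (-4499867/3992280) * r + (299047/234840) * r^2 + (-26057/99807) * x + (6002077/3992280) * x * r + (876868/499035) * x^2)^2 +
    (3505262982311/3992280000000) * (1 * r + (22879605194173/3505262982311) * r^2 + (-4691183323240/3505262982311) * x + (-594654576841/3505262982311) * x * r + (-1840213710512/3505262982311) * x^2)^2 +
    (35422087418013/70105259646220) * ((-7704359292198907693/1771104370900650000) * r^2 + 1 * x + (-993946069201578859/221388046362581250) * x * r + (-73481398922030083/221388046362581250) * x^2)^2 +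
    (2148840957019768063313041/1771104370900650000000000) * (1 * r^2 + (2118034186143420073235864/2148840957019768063313041) * x * r + (156578550088923939587768/2148840957019768063313041) * x^2)^2 +
    (24298433775401522618199289837109/1074420478509884031656520500000) * (1 * x * r + (2318478430881086371534328906959/97193735101606090472797159348436) * x^2)^2 +
    (4717863677127446837759190541542910499/38877494040642436189118863739374400000) * (1 * x^2)^2 +
    (4*x - (4*x^2+2*\<rho>+12*r^2)) * ((437893/500000) * (1 * x)^2) +
    (4*x - (4*x^2+2*\<rho>+12*r^2)) * ((54613/1000000) * (1 * r)^2) +
    (4*x - (4*x^2+2*\<rho>+12*r^2)) * ((54613/1000000) * (1 * \<rho>)^2) +
    (54613/500000) * (1 * \<rho>^3) +
    (5798827/250000) * (1 * r^2 * \<rho>) +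
    (163839/250000) * (1 * r^2 * \<rho>^2) +
    (163839/125000) * (1 * x * r^2 * \<rho>) +
    (18277829/500000) * (1 * x * r^3) +
    (54613/250000) * (1 * x^2 * \<rho>^2) +
    (54613/125000) * (1 * x^3 * \<rho>) +
    (1/1000000) * (1 * x^3 * r) +
    (63557/50000) * ((4*x - (4*x^2+2*\<rho>+12*r^2)) * \<rho>) +
    (133/1000000) * ((4*x - (4*x^2+2*\<rho>+12*r^2)) * r) +
    (54613/500000) * ((4*x - (4*x^2+2*\<rho>+12*r^2)) * x * \<rho>) +
    (6002077/1000000) * ((4*x - (4*x^2+2*\<rho>+12*r^2)) * x * r) +
    (81533/100000) * ((4*x - (4*x^2+2*\<rho>+12*r^2)) * x^2)"
    using assms by (intro add_nonneg_nonneg mult_nonneg_nonneg; simp)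
  then show ?thesis unfolding eq .
qed

lemma caseC:
  fixes x r \<rho> :: real
  assumes "x \<ge> 0" "r \<ge> 0" "\<rho> \<ge> 0"
  shows "12/5*x^2+6*r^2-4*x^3+36*x*r^2-3*x*\<rho>-9*r*\<rho>+3/8*(4*x^2+2*\<rho>+12*r^2)^2+5*(4*x^2+2*\<rho>+12*r^2+2*x)^2 - 1/20*(x^2+r^2+\<rho>^2) \<ge> 0"
proof -
  have eq: "12/5*x^2+6*r^2-4*x^3+36*x*r^2-3*x*\<rho>-9*r*\<rho>+3/8*(4*x^2+2*\<rho>+12*r^2)^2+5*(4*x^2+2*\<rho>+12*r^2+2*x)^2 - 1/20*(x^2+r^2+\<rho>^2) =
    (429/20) * (1 * \<rho> + (-30/143) * r + (846403/165000) * r^2 + (31205893/42900000) * x + (-25637/275000) * x * r + (70551467/42900000) * x^2)^2 +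
    (14317/2860) * (1 * r + (-187184907/143170000) * r^2 + (-265434049/1431700000) * x + (6803823/286340000) * x * r + (-600103781/1431700000) * x^2)^2 +
    (10571979729589781/1073775000000000) * ((121972751518143355/42287918918359124) * r^2 + 1 * x + (28426831323644259/84575837836718248) * x * r + (37091642487150781/42287918918359124) * x^2)^2 +
    (18464296422608307330538260209/169151675673436496000000000) * (1 * r^2 + (-2679725068157339893654279107/184642964226083073305382602090) * x * r + (5587189966130553520768894755/18464296422608307330538260209) * x^2)^2 +
    (37507113812233800309303315272932501167/1846429642260830733053826020900000000) * (1 * x * r + (-2350079061004555575206901242801576770/37507113812233800309303315272932501167) * x^2)^2 +
    (288969164848960607512299494036747170692352429/37507113812233800309303315272932501167000000) * (1 * x^2)^2 +
    (5794107/1000000) * (1 * x * \<rho>) +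
    (8402873/1000000) * (1 * x * r) +
    (491287/500000) * (1 * x^2) +
    (1896761/50000) * (1 * r^2 * \<rho>) +
    (5925729/100000) * (1 * r^3) +
    (999843/250000) * (1 * x * r * \<rho>) +
    (55622669/1000000) * (1 * x * r^2) +
    (15448533/1000000) * (1 * x^2 * \<rho>) +
    (15332393/1000000) * (1 * x^2 * r) +
    (1326103/200000) * (1 * x^3) +
    (9940083/1000000) * (1 * r^4) +
    (4905287/1000000) * (1 * x * r^3) +
    (11088077/1000000) * (1 * x^2 * r^2) +
    (175041/40000) * (1 * x^3 * r) +
    (876953/500000) * (1 * x^4)"
    by (simp add: algebra_simps power2_eq_square power3_eq_cube power4_eq_xxxx; simp add: field_simps)
  have "0 \<le> (429/20) * (1 * \<rho> + (-30/143) * r + (846403/165000) * r^2 + (31205893/42900000) * x + (-25637/275000) * x * r + (70551467/42900000) * x^2)^2 +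
    (14317/2860) * (1 * r + (-187184907/143170000) * r^2 + (-265434049/1431700000) * x + (6803823/286340000) * x * r + (-600103781/1431700000) * x^2)^2 +
    (10571979729589781/1073775000000000) * ((121972751518143355/42287918918359124) * r^2 + 1 * x + (28426831323644259/84575837836718248) * x * r + (37091642487150781/42287918918359124) * x^2)^2 +
    (18464296422608307330538260209/169151675673436496000000000) * (1 * r^2 + (-2679725068157339893654279107/184642964226083073305382602090) * x * r + (5587189966130553520768894755/18464296422608307330538260209) * x^2)^2 +
    (37507113812233800309303315272932501167/1846429642260830733053826020900000000) * (1 * x * r + (-2350079061004555575206901242801576770/37507113812233800309303315272932501167) * x^2)^2 +
    (288969164848960607512299494036747170692352429/37507113812233800309303315272932501167000000) * (1 * x^2)^2 +
    (5794107/1000000) * (1 * x * \<rho>) +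
    (8402873/1000000) * (1 * x * r) +
    (491287/500000) * (1 * x^2) +
    (1896761/50000) * (1 * r^2 * \<rho>) +
    (5925729/100000) * (1 * r^3) +
    (999843/250000) * (1 * x * r * \<rho>) +
    (55622669/1000000) * (1 * x * r^2) +
    (15448533/1000000) * (1 * x^2 * \<rho>) +
    (15332393/1000000) * (1 * x^2 * r) +
    (1326103/200000) * (1 * x^3) +
    (9940083/1000000) * (1 * r^4) +
    (4905287/1000000) * (1 * x * r^3) +
    (11088077/1000000) * (1 * x^2 * r^2) +
    (175041/40000) * (1 * x^3 * r) +
    (876953/500000) * (1 * x^4)"
    using assms by (intro add_nonneg_nonneg mult_nonneg_nonneg; simp)
  then show ?thesis unfolding eq .
qed

lemma lin_aux: fixes X A B E E' :: real shows "0 \<le> X + 5*A - E \<Longrightarrow> A \<le> B \<Longrightarrow> E' = E \<Longrightarrow> E' \<le> X + 5*B"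
  by linarith
lemma lin_aux2: fixes X A E :: real shows "0 \<le> X - E \<Longrightarrow> 0 \<le> A \<Longrightarrow> E \<le> X + 5*A"
  by linarith

lemma g_pos:
  fixes s u r \<rho> :: real
  assumes s1: "1/2 \<le> s" and s2: "s \<le> 1" and rho: "\<rho> \<ge> 0" and r: "r \<ge> 0"
  shows "12/5 * u^2 + 6 * r^2 - 4 * u^3 + 36 * u * r^2 - 3 * u * \<rho> - 9 * r * \<rho> + 3/8 * (4 * u^2 + 2 * \<rho> + 12 * r^2)^2 + 5 * (4 * s * u + (4 * u^2 + 2 * \<rho> + 12 * r^2))^2 \<ge> 1/20 * (u^2 + \<rho>^2 + r^2)"
proof (cases "u \<ge> 0")
  case True
  define N where "N = 4 * u^2 + 2 * \<rho> + 12 * r^2"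
  have N0: "N \<ge> 0" using rho by (simp add: N_def)
  have "2 * u + N \<le> 4 * s * u + N" using True s1 by (simp add: mult_right_mono)
  moreover have "0 \<le> 2 * u + N" using True N0 by simp
  ultimately have sq: "(2 * u + N)^2 \<le> (4 * s * u + N)^2" by (simp add: power_mono)
  have C: "12/5*u^2+6*r^2-4*u^3+36*u*r^2-3*u*\<rho>-9*r*\<rho>+3/8*N^2+5*(N+2*u)^2 - 1/20*(u^2+r^2+\<rho>^2) \<ge> 0"
    using caseC[OF True r rho] unfolding N_def .
  have sq': "(N + 2*u)^2 \<le> (4 * s * u + N)^2" using sq by (simp add: add.commute)
  have "1/20 * (u^2 + \<rho>^2 + r^2) \<le> 12/5*u^2+6*r^2-4*u^3+36*u*r^2-3*u*\<rho>-9*r*\<rho>+3/8*N^2 + 5*(4 * s * u + N)^2"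
    by (rule lin_aux[OF C sq']) (simp add: ac_simps)
  then show ?thesis unfolding N_def .
next
  case False
  define x where "x = -u"
  have x0: "x \<ge> 0" and ux: "u = -x" using False by (auto simp: x_def)
  define N where "N = 4 * x^2 + 2 * \<rho> + 12 * r^2"
  define P where "P = 12/5*x^2+6*r^2+4*x^3-36*x*r^2+3*x*\<rho>-9*r*\<rho>+3/8*N^2"
  have gx: "12/5 * u^2 + 6 * r^2 - 4 * u^3 + 36 * u * r^2 - 3 * u * \<rho> - 9 * r * \<rho> + 3/8 * (4 * u^2 + 2 * \<rho> + 12 * r^2)^2 + 5 * (4 * s * u + (4 * u^2 + 2 * \<rho> + 12 * r^2))^2
     = P + 5 * (N - 4 * s * x)^2"
    unfolding ux P_def N_def by (simp add: algebra_simps power2_eq_square power3_eq_cube)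
  have ur: "u^2 + \<rho>^2 + r^2 = x^2+r^2+\<rho>^2" unfolding ux by simp
  show ?thesis
  proof (cases "N \<ge> 4 * x")
    case True
    have "4 * s * x \<le> 4 * x" using s1 s2 x0 by (simp add: mult_left_le_one_le)
    then have q1: "(N - 4 * x)^2 \<le> (N - 4 * s * x)^2" using True by (simp add: power_mono)
    have q2: "0 \<le> P + 5*(N-4*x)^2 - 1/20*(x^2+r^2+\<rho>^2)"
      using caseB[OF x0 r rho] unfolding P_def N_def .
    have "1/20*(x^2+r^2+\<rho>^2) \<le> P + 5 * (N - 4 * s * x)^2"
      by (rule lin_aux[OF q2 q1 refl])
    then show ?thesis unfolding gx ur .
  next
    case False
    have "4*x - (4*x^2+2*\<rho>+12*r^2) \<ge> 0" using False by (simp add: N_def)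
    then have q2: "0 \<le> P - 1/20*(x^2+r^2+\<rho>^2)"
      using caseA[OF x0 r rho] unfolding P_def N_def by blast
    have q1: "0 \<le> (N - 4 * s * x)^2" by simp
    have "1/20*(x^2+r^2+\<rho>^2) \<le> P + 5 * (N - 4 * s * x)^2"
      by (rule lin_aux2[OF q2 q1])
    then show ?thesis unfolding gx ur .
  qed
qed

lemma lin_ge: "(p::real) = g + X \<Longrightarrow> 0 \<le> X \<Longrightarrow> e \<le> g \<Longrightarrow> 0 \<le> e \<Longrightarrow> 0 \<le> p"
  by linarith
lemma lin_eq: "(p::real) = g + X \<Longrightarrow> 0 \<le> X \<Longrightarrow> 1/20 * A \<le> g \<Longrightarrow> p = 0 \<Longrightarrow> A \<le> 0"
  by linarith
lemma lin3: "(a::real) \<ge> 0 \<Longrightarrow> b \<ge> 0 \<Longrightarrow> c \<ge> 0 \<Longrightarrow> a + b + c \<le> 0 \<Longrightarrow> a = 0 \<and> b = 0 \<and> c = 0"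
  by linarith

lemma mdot_scaleR: "mdot (c *\<^sub>R A) B = c * mdot A B"
  unfolding mdot_def by (simp add: sum_distrib_left mult.assoc)

lemma main:
  fixes t R :: real and h :: "real \<Rightarrow> real"
  assumes t: "t \<ge> 0" and R: "R > 1" and mn: "is_minimizer t R h"
    and hs: "\<forall>r\<in>{1..R}. h r \<ge> 1/2" and r1: "1 \<le> r" and r2: "r \<le> R"
    and hV: "V = v0 *\<^sub>R Emat \<theta> \<phi> + v1 *\<^sub>R Fmat \<theta> \<phi> + v2 *\<^sub>R Gmat \<theta> \<phi>
              + v3 *\<^sub>R Xmat \<theta> \<phi> + v4 *\<^sub>R Ymat \<theta> \<phi>"
  shows "phi_fun (Hmat h r \<theta> \<phi>) V v0 v3 v4 \<ge> 0 \<and>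
          (phi_fun (Hmat h r \<theta> \<phi>) V v0 v3 v4 = 0 \<longleftrightarrow> V = 0)"
proof -
  define s where "s = h r"
  have s1: "1/2 \<le> s" using hs r1 r2 by (simp add: s_def)
  have s2: "s \<le> 1" using h_le1[OF t mn R] r1 r2 by (simp add: s_def)
  define D where "D = Dm v0 v1 v2 v3 v4"
  define U where "U = Um \<theta> \<phi>"
  have VU: "V = U ** D ** transpose U" unfolding hV Vconj U_def D_def ..
  have tr: "trace (V ** V ** V) = 2/9 * v0^3 - 2 * v0 * v4^2 - 2 * v0 * v3^2 + (v0 + 3 * v4) * v1^2 + (v0 - 3 * v4) * v2^2 + 6 * v1 * v2 * v3"
    unfolding VU U_def conj_mult conj_trace D_def trD3 ..
  have mVV: "mdot V V = 2/3 * v0^2 + 2 * (v1^2 + v2^2 + v3^2 + v4^2)"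
    unfolding VU U_def conj_mdot D_def mdotDD ..
  have mHV: "mdot (Hmat h r \<theta> \<phi>) V = sqrt (3/2) * s * (2/3 * v0)"
    unfolding Hmat_def mdot_scaleR Emat_conj VU U_def conj_mdot D_def mdotED s_def ..
  define k where "k = sqrt (6::real)"
  define u where "u = v0 / k"
  define rr where "rr = sqrt (v3^2+v4^2) / k"
  define \<rho> where "\<rho> = v1^2+v2^2"
  define g where "g = 12/5 * u^2 + 6 * rr^2 - 4 * u^3 + 36 * u * rr^2 - 3 * u * \<rho> - 9 * rr * \<rho> + 3/8 * (4 * u^2 + 2 * \<rho> + 12 * rr^2)^2 + 5 * (4 * s * u + (4 * u^2 + 2 * \<rho> + 12 * rr^2))^2"
  define X where "X = 9 * rr * \<rho> - 3 * k/2 * (v4 * (v1^2-v2^2) + 2 * v1 * v2 * v3)"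
  have phi_eq: "phi_fun (Hmat h r \<theta> \<phi>) V v0 v3 v4 = g + X"
    unfolding phi_fun_def tr mVV mHV g_def X_def u_def rr_def \<rho>_def k_def
    by (rule phi_poly)
  have k0: "k > 0" by (simp add: k_def)
  have kk: "k * k = 6" by (simp add: k_def)
  have rho0: "\<rho> \<ge> 0" by (simp add: \<rho>_def)
  have rr0: "rr \<ge> 0" using k0 by (simp add: rr_def)
  have X0: "X \<ge> 0"
  proof -
    have "3 * k/2 * (v4 * (v1^2-v2^2) + 2 * v1 * v2 * v3) \<le> 3 * k/2 * (sqrt (v3^2+v4^2) * (v1^2+v2^2))"
      using cs_ineq[of v4 v1 v2 v3] k0 by (intro mult_left_mono) auto
    also have "\<dots> = 9 * rr * \<rho>"
    proof -
      have "3 * k/2 * (sqrt (v3^2+v4^2) * (v1^2+v2^2)) = 3 * (k * k) / 2 * (sqrt (v3^2+v4^2) / k) * (v1^2+v2^2)"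
        using k0 by (simp add: field_simps)
      then show ?thesis unfolding kk rr_def \<rho>_def by simp
    qed
    finally show ?thesis unfolding X_def by simp
  qed
  have gp: "g \<ge> 1/20 * (u^2 + \<rho>^2 + rr^2)" unfolding g_def by (rule g_pos[OF s1 s2 rho0 rr0])
  have nn: "1/20 * (u^2 + \<rho>^2 + rr^2) \<ge> 0" by simp
  have ge: "phi_fun (Hmat h r \<theta> \<phi>) V v0 v3 v4 \<ge> 0" by (rule lin_ge[OF phi_eq X0 gp nn])
  have iff: "phi_fun (Hmat h r \<theta> \<phi>) V v0 v3 v4 = 0 \<longleftrightarrow> V = 0"
  proof
    assume p0: "phi_fun (Hmat h r \<theta> \<phi>) V v0 v3 v4 = 0"
    have "u^2 + \<rho>^2 + rr^2 \<le> 0" by (rule lin_eq[OF phi_eq X0 gp p0])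
    then have z: "u^2 = 0 \<and> \<rho>^2 = 0 \<and> rr^2 = 0"
      by (intro lin3) simp_all
    then have z: "u^2 = 0" "\<rho>^2 = 0" "rr^2 = 0" by auto
    then have "v0 = 0" using k0 by (simp add: u_def)
    moreover have "v1 = 0 \<and> v2 = 0" using z(2) by (simp add: \<rho>_def sum_power2_eq_zero_iff)
    moreover have "v3 = 0 \<and> v4 = 0" using z(3) k0 by (simp add: rr_def sum_power2_eq_zero_iff)
    ultimately have "D = 0" unfolding D_def Dm_zero by simp
    then show "V = 0" unfolding VU by simp
  next
    assume "V = 0"
    then have "D = 0" unfolding VU U_def conj_zero .
    then have v: "v0 = 0" "v1 = 0" "v2 = 0" "v3 = 0" "v4 = 0" unfolding D_def Dm_zero by auto
    have "g + X = 0" unfolding g_def X_def u_def rr_def \<rho>_def v by simp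
    then show "phi_fun (Hmat h r \<theta> \<phi>) V v0 v3 v4 = 0" using phi_eq by simp
  qed
  show ?thesis using ge iff by simp
qed

theorem lemma5p5:
  shows "\<exists>hs::real. 0 < hs \<and> hs < 1 \<and>
    (\<forall>t R h. t \<ge> 0 \<longrightarrow> R > 1 \<longrightarrow> is_minimizer t R h \<longrightarrow>
       (\<forall>r\<in>{1..R}. h r \<ge> hs) \<longrightarrow>
       (\<forall>r \<theta> \<phi> V v0 v1 v2 v3 v4. 1 \<le> r \<longrightarrow> r \<le> R \<longrightarrow> V \<in> S0 \<longrightarrow>
          V = v0 *\<^sub>R Emat \<theta> \<phi> + v1 *\<^sub>R Fmat \<theta> \<phi> + v2 *\<^sub>R Gmat \<theta> \<phi>
              + v3 *\<^sub>R Xmat \<theta> \<phi> + v4 *\<^sub>R Ymat \<theta> \<phi> \<longrightarrow>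
          phi_fun (Hmat h r \<theta> \<phi>) V v0 v3 v4 \<ge> 0 \<and>
          (phi_fun (Hmat h r \<theta> \<phi>) V v0 v3 v4 = 0 \<longleftrightarrow> V = 0)))"
  apply (rule exI[of _ "1/2"])
  apply (intro conjI)
    apply simp
   apply simp
  apply (intro allI impI)
  apply (rule main)
        apply assumption+
  done
end
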